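(* Let $v$ be a flow on a compact surface. If $\mathrm{Cl}(v)=\Omega(v)$, then $\mathrm{Cl}(v)$ is closed and there are no non-closed recurrent points, no non-periodic limit circuits, and no circuits with wandering holonomy.
   Context: Surface: 2-dimensional paracompact manifold, possibly with boundary, possibly non-orientable. $\mathrm{Cl}(v)$ is the union of singular points and periodic orbits; $\Omega(v)$ the set of non-wandering points; $x$ is recurrent if $x\in\omega(x)\cup\alpha(x)$. A separatrix is a non-singular orbit whose $\alpha$- or $\omega$-limit set is a singular point. A non-trivial circuit is the image of an oriented circle under a continuous orientation-preserving map which is either a periodic orbit, or a directed graph (not a singleton) that is a union of separatrices and finitely many singular points; it is periodic if it is a periodic orbit. A collar of $\gamma$ is an open annulus with $\gamma$ as a boundary component which is a component of $U-\gamma$ for some neighborhood $U$ of $\gamma$. $\gamma$ is semi-attracting (resp. semi-repelling) w.r.t. a small collar $\mathbb{A}$ if $\omega(x)=\gamma$, $O^+(x)\subset\mathbb{A}$ (resp. $\alpha(x)=\gamma$, $O^-(x)\subset\mathbb{A}$) for all $x\in\mathbb{A}$. A limit circuit is a non-trivial circuit that is semi-attracting or semi-repelling. A circuit with wandering holonomy is a non-trivial circuit $\gamma$ for which there are a non-singular $x\in\gamma$ and arbitrarily small open transverse arcs $I\ni x$ such that the first return map on $I$ is orientation-reversing, has nonempty domain, and its domain and image are disjoint. *)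

theory Defs
  imports "HOL-Analysis.Analysis"
begin

text \<open>The surface is the whole carrier type 'a (a Hausdorff space, class t2_space).\<close>

definition half_plane :: "(real \<times> real) set" where
  "half_plane = {z. snd z \<ge> 0}"

definition is_surface :: "'a::t2_space set \<Rightarrow> bool" where
  "is_surface S \<longleftrightarrow> (\<forall>x\<in>S. \<exists>U V. openin (top_of_set S) U \<and> x \<in> U \<and>
      V \<subseteq> half_plane \<and> openin (top_of_set half_plane) V \<and> U homeomorphic V)"

definition is_flow :: "(real \<Rightarrow> 'a::topological_space \<Rightarrow> 'a) \<Rightarrow> bool" where
  "is_flow v \<longleftrightarrow> continuous_on UNIV (\<lambda>p::real \<times> 'a. v (fst p) (snd p)) \<and>
      (\<forall>x. v 0 x = x) \<and> (\<forall>s t x. v (s + t) x = v s (v t x))"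

definition orbit :: "(real \<Rightarrow> 'a \<Rightarrow> 'a) \<Rightarrow> 'a \<Rightarrow> 'a set" where
  "orbit v x = range (\<lambda>t. v t x)"

definition pos_orbit :: "(real \<Rightarrow> 'a \<Rightarrow> 'a) \<Rightarrow> 'a \<Rightarrow> 'a set" where
  "pos_orbit v x = (\<lambda>t. v t x) ` {0..}"

definition neg_orbit :: "(real \<Rightarrow> 'a \<Rightarrow> 'a) \<Rightarrow> 'a \<Rightarrow> 'a set" where
  "neg_orbit v x = (\<lambda>t. v t x) ` {..0}"

definition omega_limit :: "(real \<Rightarrow> 'a::topological_space \<Rightarrow> 'a) \<Rightarrow> 'a \<Rightarrow> 'a set" where
  "omega_limit v x = (\<Inter>T. closure ((\<lambda>t. v t x) ` {T..}))"

definition alpha_limit :: "(real \<Rightarrow> 'a::topological_space \<Rightarrow> 'a) \<Rightarrow> 'a \<Rightarrow> 'a set" where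
  "alpha_limit v x = (\<Inter>T. closure ((\<lambda>t. v t x) ` {..T}))"

definition singular :: "(real \<Rightarrow> 'a \<Rightarrow> 'a) \<Rightarrow> 'a \<Rightarrow> bool" where
  "singular v x \<longleftrightarrow> (\<forall>t. v t x = x)"

definition Cl :: "(real \<Rightarrow> 'a \<Rightarrow> 'a) \<Rightarrow> 'a set" where
  "Cl v = {x. singular v x \<or> (\<exists>T>0. v T x = x)}"

definition periodic_orbit :: "(real \<Rightarrow> 'a \<Rightarrow> 'a) \<Rightarrow> 'a set \<Rightarrow> bool" where
  "periodic_orbit v \<gamma> \<longleftrightarrow> (\<exists>x. \<not> singular v x \<and> (\<exists>T>0. v T x = x) \<and> \<gamma> = orbit v x)"

definition Omega :: "(real \<Rightarrow> 'a::topological_space \<Rightarrow> 'a) \<Rightarrow> 'a set" where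
  "Omega v = {x. \<forall>U. open U \<and> x \<in> U \<longrightarrow> (\<forall>T. \<exists>t>T. v t ` U \<inter> U \<noteq> {})}"

definition recurrent :: "(real \<Rightarrow> 'a::topological_space \<Rightarrow> 'a) \<Rightarrow> 'a \<Rightarrow> bool" where
  "recurrent v x \<longleftrightarrow> x \<in> omega_limit v x \<union> alpha_limit v x"

definition separatrix :: "(real \<Rightarrow> 'a::topological_space \<Rightarrow> 'a) \<Rightarrow> 'a \<Rightarrow> bool" where
  "separatrix v x \<longleftrightarrow> \<not> singular v x \<and>
     (\<exists>p. singular v p \<and> (omega_limit v x = {p} \<or> alpha_limit v x = {p}))"

text \<open>A continuous orientation-preserving map from the circle R/Z: near any parameter
  mapped to a non-singular point, it moves forward along the orbit.\<close>
definition oriented_loop :: "(real \<Rightarrow> 'a::topological_space \<Rightarrow> 'a) \<Rightarrow> (real \<Rightarrow> 'a) \<Rightarrow> bool" where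
  "oriented_loop v f \<longleftrightarrow> continuous_on UNIV f \<and> (\<forall>s. f (s + 1) = f s) \<and>
     (\<forall>s. \<not> singular v (f s) \<longrightarrow> (\<exists>\<delta>>0. \<exists>\<tau>. \<tau> s = 0 \<and> strict_mono_on {s-\<delta><..<s+\<delta>} \<tau> \<and>
         (\<forall>r\<in>{s-\<delta><..<s+\<delta>}. f r = v (\<tau> r) (f s))))"

definition nontrivial_circuit :: "(real \<Rightarrow> 'a::topological_space \<Rightarrow> 'a) \<Rightarrow> 'a set \<Rightarrow> bool" where
  "nontrivial_circuit v \<gamma> \<longleftrightarrow> periodic_orbit v \<gamma> \<or>
     ((\<exists>f. oriented_loop v f \<and> \<gamma> = f ` {0..1}) \<and> \<not> (\<exists>p. \<gamma> = {p}) \<and>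
      (\<exists>F E. finite F \<and> (\<forall>p\<in>F. singular v p) \<and> (\<forall>x\<in>E. separatrix v x) \<and>
         \<gamma> = F \<union> (\<Union>x\<in>E. orbit v x)))"

definition open_annulus :: "complex set" where
  "open_annulus = {z. 1 < cmod z \<and> cmod z < 2}"

definition collar :: "'a::topological_space set \<Rightarrow> 'a set \<Rightarrow> bool" where
  "collar \<gamma> A \<longleftrightarrow> open A \<and> A homeomorphic open_annulus \<and> \<gamma> \<in> components (frontier A) \<and>
     (\<exists>U. open U \<and> \<gamma> \<subseteq> U \<and> A \<in> components (U - \<gamma>))"

definition semi_attracting :: "(real \<Rightarrow> 'a::topological_space \<Rightarrow> 'a) \<Rightarrow> 'a set \<Rightarrow> bool" where
  "semi_attracting v \<gamma> \<longleftrightarrow> (\<exists>A. collar \<gamma> A \<and>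
      (\<forall>x\<in>A. omega_limit v x = \<gamma> \<and> pos_orbit v x \<subseteq> A))"

definition semi_repelling :: "(real \<Rightarrow> 'a::topological_space \<Rightarrow> 'a) \<Rightarrow> 'a set \<Rightarrow> bool" where
  "semi_repelling v \<gamma> \<longleftrightarrow> (\<exists>A. collar \<gamma> A \<and>
      (\<forall>x\<in>A. alpha_limit v x = \<gamma> \<and> neg_orbit v x \<subseteq> A))"

definition limit_circuit :: "(real \<Rightarrow> 'a::topological_space \<Rightarrow> 'a) \<Rightarrow> 'a set \<Rightarrow> bool" where
  "limit_circuit v \<gamma> \<longleftrightarrow> nontrivial_circuit v \<gamma> \<and> (semi_attracting v \<gamma> \<or> semi_repelling v \<gamma>)"

text \<open>Open transverse arc (open arc, or half-open arc ending on the boundary of the surface),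
  characterised topologically by a flow box onto an open set.\<close>
definition transverse_arc :: "(real \<Rightarrow> 'a::topological_space \<Rightarrow> 'a) \<Rightarrow> 'a set \<Rightarrow> bool" where
  "transverse_arc v I \<longleftrightarrow> (I homeomorphic {0<..<1::real} \<or> I homeomorphic {0..<1::real}) \<and>
     (\<exists>\<epsilon>>0. \<exists>g. open ((\<lambda>p. v (fst p) (snd p)) ` ({-\<epsilon><..<\<epsilon>} \<times> I)) \<and>
        homeomorphism ({-\<epsilon><..<\<epsilon>} \<times> I) ((\<lambda>p. v (fst p) (snd p)) ` ({-\<epsilon><..<\<epsilon>} \<times> I))
          (\<lambda>p. v (fst p) (snd p)) g)"

definition fr_dom :: "(real \<Rightarrow> 'a \<Rightarrow> 'a) \<Rightarrow> 'a set \<Rightarrow> 'a set" where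
  "fr_dom v I = {y\<in>I. \<exists>t>0. v t y \<in> I}"

definition fr_time :: "(real \<Rightarrow> 'a \<Rightarrow> 'a) \<Rightarrow> 'a set \<Rightarrow> 'a \<Rightarrow> real" where
  "fr_time v I y = (THE t. t > 0 \<and> v t y \<in> I \<and> (\<forall>s. 0 < s \<and> s < t \<longrightarrow> v s y \<notin> I))"

text \<open>First return map on I (meaningful on fr_dom v I).\<close>
definition first_return :: "(real \<Rightarrow> 'a \<Rightarrow> 'a) \<Rightarrow> 'a set \<Rightarrow> 'a \<Rightarrow> 'a" where
  "first_return v I y = v (fr_time v I y) y"

definition fr_orientation_reversing :: "(real \<Rightarrow> 'a::topological_space \<Rightarrow> 'a) \<Rightarrow> 'a set \<Rightarrow> bool" where
  "fr_orientation_reversing v I \<longleftrightarrow> (\<exists>(J::real set) h k. (J = {0<..<1} \<or> J = {0..<1}) \<and> homeomorphism J I h k \<and>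
     (\<forall>a\<in>k ` fr_dom v I. \<exists>\<delta>>0. \<forall>b\<in>k ` fr_dom v I. dist b a < \<delta> \<longrightarrow>
        (b < a \<longrightarrow> k (first_return v I (h a)) < k (first_return v I (h b))) \<and>
        (a < b \<longrightarrow> k (first_return v I (h b)) < k (first_return v I (h a)))))"

definition wandering_holonomy :: "(real \<Rightarrow> 'a::topological_space \<Rightarrow> 'a) \<Rightarrow> 'a set \<Rightarrow> bool" where
  "wandering_holonomy v \<gamma> \<longleftrightarrow> nontrivial_circuit v \<gamma> \<and>
     (\<exists>x\<in>\<gamma>. \<not> singular v x \<and> (\<forall>W. open W \<and> x \<in> W \<longrightarrow>
        (\<exists>I. I \<subseteq> W \<and> x \<in> I \<and> transverse_arc v I \<and> fr_orientation_reversing v I \<and>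
             fr_dom v I \<noteq> {} \<and> fr_dom v I \<inter> first_return v I ` fr_dom v I = {})))"

end

theory Submission
  imports Defs
begin


lemma flow_comp: "is_flow v \<Longrightarrow> v s (v t x) = v (s+t) x"
  by (simp add: is_flow_def)

lemma flow_zero: "is_flow v \<Longrightarrow> v 0 x = x"
  by (simp add: is_flow_def)

lemma flow_cont_t: assumes "is_flow v" shows "continuous_on UNIV (\<lambda>t. v t x)"
proof -
  have c: "continuous_on UNIV (\<lambda>p::real \<times> 'a. v (fst p) (snd p))" using assms by (simp add: is_flow_def)
  have "continuous_on UNIV ((\<lambda>p::real \<times> 'a. v (fst p) (snd p)) \<circ> (\<lambda>t. (t,x)))"
    by (rule continuous_on_compose, intro continuous_intros, rule continuous_on_subset[OF c]) simp
  then show ?thesis by (simp add: o_def)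
qed

lemma flow_cont_x: assumes "is_flow v" shows "continuous_on UNIV (\<lambda>x. v t x)"
proof -
  have c: "continuous_on UNIV (\<lambda>p::real \<times> 'a. v (fst p) (snd p))" using assms by (simp add: is_flow_def)
  have "continuous_on UNIV ((\<lambda>p::real \<times> 'a. v (fst p) (snd p)) \<circ> (\<lambda>x. (t,x)))"
    by (rule continuous_on_compose, intro continuous_intros, rule continuous_on_subset[OF c]) simp
  then show ?thesis by (simp add: o_def)
qed

lemma omega_hit:
  assumes "y \<in> omega_limit v z" "open U" "y \<in> U"
  shows "\<exists>t\<ge>T. v t z \<in> U"
proof -
  have "y \<in> closure ((\<lambda>t. v t z) ` {T..})" using assms(1) by (auto simp: omega_limit_def)
  then have "U \<inter> (\<lambda>t. v t z) ` {T..} \<noteq> {}" using open_Int_closure_eq_empty[OF assms(2)] assms(3) by blast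
  then show ?thesis by auto
qed

lemma alpha_hit:
  assumes "y \<in> alpha_limit v z" "open U" "y \<in> U"
  shows "\<exists>t\<le>T. v t z \<in> U"
proof -
  have "y \<in> closure ((\<lambda>t. v t z) ` {..T})" using assms(1) by (auto simp: alpha_limit_def)
  then have "U \<inter> (\<lambda>t. v t z) ` {..T} \<noteq> {}" using open_Int_closure_eq_empty[OF assms(2)] assms(3) by blast
  then show ?thesis by auto
qed

lemma omega_Omega:
  assumes fl: "is_flow v" and y: "y \<in> omega_limit v z" shows "y \<in> Omega v"
  unfolding Omega_def
proof (intro CollectI allI impI)
  fix U T assume U: "open U \<and> y \<in> U"
  obtain t1 where t1: "t1 \<ge> 0" "v t1 z \<in> U" using omega_hit[OF y, of U 0] U by auto
  obtain t2 where t2: "t2 \<ge> t1 + \<bar>T\<bar> + 1" "v t2 z \<in> U" using omega_hit[OF y, of U "t1 + \<bar>T\<bar> + 1"] U by auto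
  have "v (t2 - t1) (v t1 z) = v t2 z" using flow_comp[OF fl] by simp
  then have "v t2 z \<in> v (t2 - t1) ` U \<inter> U" using t1 t2 by (metis IntI image_eqI)
  moreover have "t2 - t1 > T" using t2 by linarith
  ultimately show "\<exists>t>T. v t ` U \<inter> U \<noteq> {}" by blast
qed

lemma alpha_Omega:
  assumes fl: "is_flow v" and y: "y \<in> alpha_limit v z" shows "y \<in> Omega v"
  unfolding Omega_def
proof (intro CollectI allI impI)
  fix U T assume U: "open U \<and> y \<in> U"
  obtain t1 where t1: "t1 \<le> 0" "v t1 z \<in> U" using alpha_hit[OF y, of U 0] U by auto
  obtain t2 where t2: "t2 \<le> t1 - \<bar>T\<bar> - 1" "v t2 z \<in> U" using alpha_hit[OF y, of U "t1 - \<bar>T\<bar> - 1"] U by auto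
  have "v (t1 - t2) (v t2 z) = v t1 z" using flow_comp[OF fl] by simp
  then have "v t1 z \<in> v (t1 - t2) ` U \<inter> U" using t1 t2 by (metis IntI image_eqI)
  moreover have "t1 - t2 > T" using t2 by linarith
  ultimately show "\<exists>t>T. v t ` U \<inter> U \<noteq> {}" by blast
qed

lemma Omega_closed: "closed (Omega v)"
  unfolding closed_def
proof (subst open_subopen, intro ballI)
  fix x assume "x \<in> - Omega v"
  then obtain U T where U: "open U" "x \<in> U" "\<forall>t>T. v t ` U \<inter> U = {}"
    by (auto simp: Omega_def)
  have "U \<subseteq> - Omega v"
  proof
    fix y assume "y \<in> U"
    then show "y \<in> - Omega v" using U unfolding Omega_def by blast
  qed
  then show "\<exists>T. open T \<and> x \<in> T \<and> T \<subseteq> - Omega v" using U by blast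
qed

lemma periodic_iter:
  assumes fl: "is_flow v" and p: "v T e = e"
  shows "v (real n * T) e = e"
proof (induction n)
  case 0 then show ?case using flow_zero[OF fl] by simp
next
  case (Suc n)
  have "real (Suc n) * T = T + real n * T" by (simp add: algebra_simps)
  then have "v (real (Suc n) * T) e = v T (v (real n * T) e)" using flow_comp[OF fl, of T "real n * T" e] by simp
  then show ?case using Suc p by simp
qed

lemma periodic_in_limits:
  assumes fl: "is_flow v" and p: "v T e = e" and T: "T > 0"
  shows "e \<in> omega_limit v e" "e \<in> alpha_limit v e"
proof -
  have neg: "v (- T) e = e" using flow_comp[OF fl, of "-T" T e] p flow_zero[OF fl] by simp
  show "e \<in> omega_limit v e" unfolding omega_limit_def
  proof (intro INT_I)
    fix T' :: real
    obtain n::nat where n: "T' < real n * T" using reals_Archimedean3[OF T] by meson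
    have "v (real n * T) e = e" by (rule periodic_iter[OF fl p])
    then have "e = (\<lambda>t. v t e) (real n * T)" by simp
    then have "e \<in> (\<lambda>t. v t e) ` {T'..}" by (rule image_eqI) (use n in simp)
    then show "e \<in> closure ((\<lambda>t. v t e) ` {T'..})" by (rule closure_subset[THEN subsetD])
  qed
  show "e \<in> alpha_limit v e" unfolding alpha_limit_def
  proof (intro INT_I)
    fix T' :: real
    obtain n::nat where n: "- T' < real n * T" using reals_Archimedean3[OF T] by meson
    have "v (real n * (-T)) e = e" by (rule periodic_iter[OF fl neg])
    moreover have "real n * (-T) \<le> T'" using n mult_minus_right[of "real n" T] by linarith
    ultimately have "e = (\<lambda>t. v t e) (real n * (-T))" "real n * (-T) \<in> {..T'}" by simp_all
    then have "e \<in> (\<lambda>t. v t e) ` {..T'}" by (rule image_eqI)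
    then show "e \<in> closure ((\<lambda>t. v t e) ` {..T'})" by (rule closure_subset[THEN subsetD])
  qed
qed

lemma finite_connected_t2:
  fixes S :: "'a::t2_space set"
  assumes "finite S" "connected S" "a \<in> S" "b \<in> S"
  shows "a = b"
proof (rule ccontr)
  assume ab: "a \<noteq> b"
  have "closed {a}" "closed (S - {a})" using assms(1) by (auto intro: finite_imp_closed)
  moreover have "S \<subseteq> {a} \<union> (S - {a})" by blast
  moreover have "{a} \<inter> (S - {a}) \<inter> S = {}" by blast
  moreover have "{a} \<inter> S \<noteq> {}" using assms(3) by blast
  moreover have "(S - {a}) \<inter> S \<noteq> {}" using assms(4) ab by blast
  ultimately show False using assms(2) unfolding connected_closed by blast
qed



lemma interior_max_not_inj:
  fixes F :: "real \<Rightarrow> real"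
  assumes eta: "\<eta> > 0" and cont: "continuous_on {c-\<eta>..c+\<eta>} F"
    and mx: "\<forall>x\<in>{c-\<eta>..c+\<eta>}. F x \<le> F c"
  shows "\<not> inj_on F {c-\<eta>..c+\<eta>}"
proof
  assume inj: "inj_on F {c-\<eta>..c+\<eta>}"
  have am: "c-\<eta> \<in> {c-\<eta>..c+\<eta>}" "c+\<eta> \<in> {c-\<eta>..c+\<eta>}" "c \<in> {c-\<eta>..c+\<eta>}" using eta by auto
  have fa: "F (c-\<eta>) \<le> F c" "F (c+\<eta>) \<le> F c" using mx am by auto
  show False
  proof (cases "F (c-\<eta>) \<le> F (c+\<eta>)")
    case True
    have c1: "continuous_on {c-\<eta>..c} F" by (rule continuous_on_subset[OF cont]) auto
    obtain x where x: "c-\<eta> \<le> x" "x \<le> c" "F x = F (c+\<eta>)"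
      using IVT'[of F "c-\<eta>" "F (c+\<eta>)" c, OF True fa(2) _ c1] eta by auto
    have "x \<in> {c-\<eta>..c+\<eta>}" using x eta by auto
    then have "x = c+\<eta>" using inj am x(3) by (meson inj_onD)
    then show False using x eta by linarith
  next
    case False
    have c1: "continuous_on {c..c+\<eta>} F" by (rule continuous_on_subset[OF cont]) auto
    obtain x where x: "c \<le> x" "x \<le> c+\<eta>" "F x = F (c-\<eta>)"
      using IVT2'[of F "c+\<eta>" "F (c-\<eta>)" c, OF _ fa(1) _ c1] False eta by auto
    have "x \<in> {c-\<eta>..c+\<eta>}" using x eta by auto
    then have "x = c-\<eta>" using inj am x(3) by (meson inj_onD)
    then show False using x eta by linarith
  qed
qed

lemma loc_inj_aux:
  fixes F :: "real \<Rightarrow> real"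
  assumes J: "is_interval J" and cont: "continuous_on J F"
    and loc: "\<forall>a\<in>J. \<exists>d>0. inj_on F (ball a d \<inter> J)"
    and ab: "a < b" "a \<in> J" "b \<in> J" "F a = F b"
  shows False
proof -
  have sub: "{a..b} \<subseteq> J"
  proof
    fix x assume "x \<in> {a..b}"
    then have "a \<le> x" "x \<le> b" by auto
    then show "x \<in> J" by (rule mem_is_interval_1_I[OF J ab(2) ab(3)])
  qed
  have cab: "continuous_on {a..b} F" using continuous_on_subset[OF cont sub] .
  obtain c1 where c1: "c1 \<in> {a..b}" "\<forall>y\<in>{a..b}. F y \<le> F c1"
    using continuous_attains_sup[OF compact_Icc _ cab] ab by auto
  obtain c2 where c2: "c2 \<in> {a..b}" "\<forall>y\<in>{a..b}. F c2 \<le> F y"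
    using continuous_attains_inf[OF compact_Icc _ cab] ab by auto
  obtain c where c: "a < c" "c < b" and ext: "(\<forall>y\<in>{a..b}. F y \<le> F c) \<or> (\<forall>y\<in>{a..b}. F c \<le> F y)"
  proof -
    consider "a < c1 \<and> c1 < b" | "a < c2 \<and> c2 < b" | "(c1 = a \<or> c1 = b) \<and> (c2 = a \<or> c2 = b)"
      using c1(1) c2(1) unfolding atLeastAtMost_iff by argo
    then show ?thesis
    proof cases
      case 1 then show ?thesis using c1(2) by (intro that[of c1]) simp_all
    next
      case 2 then show ?thesis using c2(2) by (intro that[of c2]) simp_all
    next
      case 3
      then have e1: "F c1 = F a" "F c2 = F a" using ab(4) by auto
      have "\<forall>y\<in>{a..b}. F y \<le> F ((a+b)/2)"
      proof
        fix y assume y: "y \<in> {a..b}"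
        have m: "(a+b)/2 \<in> {a..b}" using ab by auto
        have "F y \<le> F a" using c1(2) y e1 by auto
        also have "F a \<le> F ((a+b)/2)" using c2(2) m e1 by auto
        finally show "F y \<le> F ((a+b)/2)" .
      qed
      then show ?thesis using that[of "(a+b)/2"] ab by auto
    qed
  qed
  have cJ: "c \<in> J" using sub c by auto
  obtain d where d: "d > 0" "inj_on F (ball c d \<inter> J)" using loc cJ by blast
  define \<eta> where "\<eta> = min d (min (c-a) (b-c)) / 2"
  have eta: "\<eta> > 0" "\<eta> < d" "\<eta> < c - a" "\<eta> < b - c" using d c by (auto simp: \<eta>_def)
  have s1: "{c-\<eta>..c+\<eta>} \<subseteq> {a..b}" using eta by auto
  have s2: "{c-\<eta>..c+\<eta>} \<subseteq> ball c d \<inter> J"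
  proof
    fix x assume x: "x \<in> {c-\<eta>..c+\<eta>}"
    then have "dist c x < d" using eta by (auto simp: dist_real_def)
    then show "x \<in> ball c d \<inter> J" using x s1 sub by auto
  qed
  have inj: "inj_on F {c-\<eta>..c+\<eta>}" using inj_on_subset[OF d(2) s2] .
  have cc: "continuous_on {c-\<eta>..c+\<eta>} F" using continuous_on_subset[OF cab s1] .
  from ext show False
  proof
    assume "\<forall>y\<in>{a..b}. F y \<le> F c"
    then have "\<forall>x\<in>{c-\<eta>..c+\<eta>}. F x \<le> F c" using s1 by auto
    then show False using interior_max_not_inj[OF eta(1) cc] inj by blast
  next
    assume "\<forall>y\<in>{a..b}. F c \<le> F y"
    then have m: "\<forall>x\<in>{c-\<eta>..c+\<eta>}. (\<lambda>x. - F x) x \<le> (\<lambda>x. - F x) c" using s1 by auto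
    have cc': "continuous_on {c-\<eta>..c+\<eta>} (\<lambda>x. - F x)" using cc by (intro continuous_intros)
    have inj': "inj_on (\<lambda>x. - F x) {c-\<eta>..c+\<eta>}"
    proof (rule inj_onI)
      fix x y assume xA: "x \<in> {c-\<eta>..c+\<eta>}" and yA: "y \<in> {c-\<eta>..c+\<eta>}" and e: "- F x = - F y"
      from e have "F x = F y" by simp
      then show "x = y" using inj_onD[OF inj _ xA yA] by simp
    qed
    show False using interior_max_not_inj[OF eta(1) cc' m] inj' by blast
  qed
qed

lemma loc_inj_imp_inj:
  fixes F :: "real \<Rightarrow> real"
  assumes J: "is_interval J" and cont: "continuous_on J F"
    and loc: "\<forall>a\<in>J. \<exists>d>0. inj_on F (ball a d \<inter> J)"
  shows "inj_on F J"
proof (rule inj_onI)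
  fix a b assume a: "a \<in> J" and b: "b \<in> J" and e: "F a = F b"
  show "a = b"
  proof (rule linorder_cases[of a b])
    assume "a < b" then show ?thesis using loc_inj_aux[OF J cont loc _ a b e] by blast
  next
    assume "b < a" then show ?thesis using loc_inj_aux[OF J cont loc _ b a e[symmetric]] by blast
  qed
qed



lemma homeo_inj:
  fixes S :: "'a::topological_space set"
  assumes "S homeomorphic (J::real set)"
  shows "\<exists>c::'a \<Rightarrow> real. continuous_on S c \<and> inj_on c S"
proof -
  obtain f k where h: "homeomorphism S J f k" using assms unfolding homeomorphic_def by blast
  have "continuous_on S f" using h unfolding homeomorphism_def by blast
  moreover have "inj_on f S"
  proof (rule inj_on_inverseI)
    fix x assume "x \<in> S" then show "k (f x) = x" using h unfolding homeomorphism_def by blast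
  qed
  ultimately show ?thesis by blast
qed

lemma homeo_from_interval:
  assumes "I homeomorphic {0<..<1::real} \<or> I homeomorphic {0..<1::real}"
  shows "\<exists>(J::real set) h k. is_interval J \<and> homeomorphism J I h k"
proof -
  have i1: "is_interval {0<..<1::real}" unfolding is_interval_convex_1 by (rule convex_real_interval)
  have i2: "is_interval {0..<1::real}" unfolding is_interval_convex_1 by (rule convex_real_interval)
  from assms show ?thesis
  proof
    assume "I homeomorphic {0<..<1::real}"
    then have "{0<..<1::real} homeomorphic I" by (rule homeomorphic_sym[THEN iffD1])
    then obtain h k where "homeomorphism {0<..<1::real} I h k" unfolding homeomorphic_def by blast
    then show ?thesis using i1 by (intro exI conjI)
  next
    assume "I homeomorphic {0..<1::real}"
    then have "{0..<1::real} homeomorphic I" by (rule homeomorphic_sym[THEN iffD1])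
    then obtain h k where "homeomorphism {0..<1::real} I h k" unfolding homeomorphic_def by blast
    then show ?thesis using i2 by (intro exI conjI)
  qed
qed

lemma key_lemma:
  fixes v :: "real \<Rightarrow> 'a::t2_space \<Rightarrow> 'a"
  assumes fl: "is_flow v"
    and I0: "I0 homeomorphic {0<..<1::real} \<or> I0 homeomorphic {0..<1::real}"
    and h0: "homeomorphism ({-e0<..<e0} \<times> I0) ((\<lambda>p. v (fst p) (snd p)) ` ({-e0<..<e0} \<times> I0)) (\<lambda>p. v (fst p) (snd p)) g"
    and tI: "transverse_arc v I"
    and sub: "I \<subseteq> (\<lambda>p. v (fst p) (snd p)) ` ({-e0/3<..<e0/3} \<times> I0)"
    and y: "y \<in> I" "v t y \<in> I" "0 < t" "t < e0/3"
  shows False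
proof -
  define \<Phi> where "\<Phi> = (\<lambda>p::real \<times> 'a. v (fst p) (snd p))"
  define D where "D = {-e0<..<e0} \<times> I0"
  define B where "B = \<Phi> ` D"
  have hD: "homeomorphism D B \<Phi> g" using h0 unfolding \<Phi>_def D_def B_def .
  have gPhi: "\<And>p. p \<in> D \<Longrightarrow> g (\<Phi> p) = p" using hD unfolding homeomorphism_def by blast
  have Phig: "\<And>q. q \<in> B \<Longrightarrow> \<Phi> (g q) = q" using hD unfolding homeomorphism_def by blast
  have gB: "\<And>q. q \<in> B \<Longrightarrow> g q \<in> D" using hD unfolding homeomorphism_def by blast
  have gcont: "continuous_on B g" using hD unfolding homeomorphism_def by blast
  have IB: "I \<subseteq> B"
  proof
    fix q assume "q \<in> I"
    then have "q \<in> \<Phi> ` ({-e0/3<..<e0/3} \<times> I0)" using sub unfolding \<Phi>_def by blast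
    moreover have "{-e0/3<..<e0/3} \<times> I0 \<subseteq> D" unfolding D_def by auto
    ultimately show "q \<in> B" unfolding B_def by blast
  qed
  have "\<exists>c::'a \<Rightarrow> real. continuous_on I0 c \<and> inj_on c I0"
    using I0
  proof
    assume "I0 homeomorphic {0<..<1::real}" then show ?thesis by (rule homeo_inj)
  next
    assume "I0 homeomorphic {0..<1::real}" then show ?thesis by (rule homeo_inj)
  qed
  then obtain c0 :: "'a \<Rightarrow> real" where c0: "continuous_on I0 c0" "inj_on c0 I0" by blast
  have Ih: "I homeomorphic {0<..<1::real} \<or> I homeomorphic {0..<1::real}"   using tI unfolding transverse_arc_def by blast
  then obtain J :: "real set" and h :: "real \<Rightarrow> 'a" and k :: "'a \<Rightarrow> real" where J: "is_interval J" and hJ: "homeomorphism J I h k"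
    using homeo_from_interval[OF Ih] by blast
  have hk: "\<And>q. q \<in> I \<Longrightarrow> h (k q) = q" using hJ unfolding homeomorphism_def by blast
  have kh: "\<And>a. a \<in> J \<Longrightarrow> k (h a) = a" using hJ unfolding homeomorphism_def by blast
  have hI: "\<And>a. a \<in> J \<Longrightarrow> h a \<in> I" using hJ unfolding homeomorphism_def by blast
  have kI: "\<And>q. q \<in> I \<Longrightarrow> k q \<in> J" using hJ unfolding homeomorphism_def by blast
  have hcont: "continuous_on J h" using hJ unfolding homeomorphism_def by blast
  obtain \<epsilon> gI where eps: "\<epsilon> > 0"
    and hI2: "homeomorphism ({-\<epsilon><..<\<epsilon>} \<times> I) ((\<lambda>p. v (fst p) (snd p)) ` ({-\<epsilon><..<\<epsilon>} \<times> I)) (\<lambda>p. v (fst p) (snd p)) gI"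
    using tI unfolding transverse_arc_def by blast
  have injI: "\<And>p1 p2. p1 \<in> {-\<epsilon><..<\<epsilon>} \<times> I \<Longrightarrow> p2 \<in> {-\<epsilon><..<\<epsilon>} \<times> I \<Longrightarrow> \<Phi> p1 = \<Phi> p2 \<Longrightarrow> p1 = p2"
  proof -
    fix p1 p2 assume p: "p1 \<in> {-\<epsilon><..<\<epsilon>} \<times> I" "p2 \<in> {-\<epsilon><..<\<epsilon>} \<times> I" "\<Phi> p1 = \<Phi> p2"
    have "gI (\<Phi> p1) = p1" "gI (\<Phi> p2) = p2" using hI2 p(1,2) unfolding homeomorphism_def \<Phi>_def by blast+
    then show "p1 = p2" using p(3) by metis
  qed
  have Bv: "\<And>q. q \<in> B \<Longrightarrow> v (fst (g q)) (snd (g q)) = q"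
  proof -
    fix q assume q: "q \<in> B"
    have "\<Phi> (g q) = q" using Phig q .
    then show "v (fst (g q)) (snd (g q)) = q" unfolding \<Phi>_def .
  qed
  have Bs: "\<And>q. q \<in> B \<Longrightarrow> snd (g q) \<in> I0"
  proof -
    fix q assume q: "q \<in> B"
    have "g q \<in> D" using gB q .
    then show "snd (g q) \<in> I0" unfolding D_def by (simp add: mem_Times_iff)
  qed
  have loc: "\<And>q1 q2. q1 \<in> I \<Longrightarrow> q2 \<in> I \<Longrightarrow> \<bar>fst (g q1) - fst (g q2)\<bar> < \<epsilon> \<Longrightarrow> snd (g q1) = snd (g q2) \<Longrightarrow> q1 = q2"
  proof -
    fix q1 q2 assume q: "q1 \<in> I" "q2 \<in> I" "\<bar>fst (g q1) - fst (g q2)\<bar> < \<epsilon>" "snd (g q1) = snd (g q2)"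
    define s1 where "s1 = fst (g q1)"
    define s2 where "s2 = fst (g q2)"
    define z where "z = snd (g q1)"
    have q1B: "q1 \<in> B" using IB q(1) by (rule subsetD)
    have q2B: "q2 \<in> B" using IB q(2) by (rule subsetD)
    have e1: "q1 = v s1 z" using Bv[OF q1B] unfolding s1_def z_def by simp
    have e2: "q2 = v s2 z" using Bv[OF q2B] q(4) unfolding s2_def z_def by simp
    have "v (s2 - s1) q1 = v (s2 - s1 + s1) z" using e1 flow_comp[OF fl] by simp
    then have "v (s2 - s1) q1 = q2" using e2 by simp
    then have eq: "\<Phi> (s2 - s1, q1) = \<Phi> (0, q2)" unfolding \<Phi>_def using flow_zero[OF fl] by simp
    have m1: "(s2 - s1, q1) \<in> {-\<epsilon><..<\<epsilon>} \<times> I" using q(1,3) unfolding s1_def s2_def by auto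
    have m2: "(0, q2) \<in> {-\<epsilon><..<\<epsilon>} \<times> I" using q(2) eps by auto
    have "(s2 - s1, q1) = (0, q2)" by (rule injI[OF m1 m2 eq])
    then show "q1 = q2" by simp
  qed
  define F where "F = (\<lambda>a. c0 (snd (g (h a))))"
  have hB: "h ` J \<subseteq> B"
  proof (rule image_subsetI)
    fix a assume "a \<in> J" then have "h a \<in> I" by (rule hI)
    then show "h a \<in> B" by (rule subsetD[OF IB])
  qed
  have ghcont: "continuous_on J (\<lambda>a. g (h a))" using continuous_on_compose2[OF gcont hcont hB] .
  have sgh: "(\<lambda>a. snd (g (h a))) ` J \<subseteq> I0"
  proof (rule image_subsetI)
    fix a assume "a \<in> J" then have "h a \<in> B" using hB by blast
    then show "snd (g (h a)) \<in> I0" by (rule Bs)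
  qed
  have sghcont: "continuous_on J (\<lambda>a. snd (g (h a)))" using ghcont by (intro continuous_intros)
  have Fcont: "continuous_on J F" unfolding F_def using continuous_on_compose2[OF c0(1) sghcont sgh] .
  have fghcont: "continuous_on J (\<lambda>a. fst (g (h a)))" using ghcont by (intro continuous_intros)
  have Floc: "\<forall>a\<in>J. \<exists>d>0. inj_on F (ball a d \<inter> J)"
  proof
    fix a assume a: "a \<in> J"
    have "\<exists>d>0. \<forall>x'\<in>J. dist x' a < d \<longrightarrow> dist (fst (g (h x'))) (fst (g (h a))) < \<epsilon>/2"
    proof -
      have "\<forall>x\<in>J. \<forall>e>0. \<exists>d>0. \<forall>x'\<in>J. dist x' x < d \<longrightarrow> dist (fst (g (h x'))) (fst (g (h x))) < e"
        using fghcont unfolding continuous_on_iff .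
      moreover have "\<epsilon>/2 > 0" using eps by simp
      ultimately show ?thesis using a by blast
    qed
    then obtain d where d: "d > 0" "\<forall>x'\<in>J. dist x' a < d \<longrightarrow> dist (fst (g (h x'))) (fst (g (h a))) < \<epsilon>/2" by blast
    have "inj_on F (ball a d \<inter> J)"
    proof (rule inj_onI)
      fix a1 a2 assume a1: "a1 \<in> ball a d \<inter> J" and a2: "a2 \<in> ball a d \<inter> J" and Fe: "F a1 = F a2"
      have j1: "a1 \<in> J" "dist a1 a < d" using a1 by (auto simp: dist_commute)
      have j2: "a2 \<in> J" "dist a2 a < d" using a2 by (auto simp: dist_commute)
      have t1: "dist (fst (g (h a1))) (fst (g (h a))) < \<epsilon>/2" using d(2) j1 by blast
      have t2: "dist (fst (g (h a2))) (fst (g (h a))) < \<epsilon>/2" using d(2) j2 by blast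
      have t: "\<bar>fst (g (h a1)) - fst (g (h a2))\<bar> < \<epsilon>" using t1 t2 unfolding dist_real_def by linarith
      have "snd (g (h a1)) \<in> I0" "snd (g (h a2)) \<in> I0" using sgh j1(1) j2(1) by blast+
      then have s: "snd (g (h a1)) = snd (g (h a2))" using inj_onD[OF c0(2)] Fe unfolding F_def by blast
      have "h a1 = h a2" using loc[OF hI[OF j1(1)] hI[OF j2(1)] t s] .
      then show "a1 = a2" using kh j1(1) j2(1) by metis
    qed
    then show "\<exists>d>0. inj_on F (ball a d \<inter> J)" using d(1) by blast
  qed
  have Finj: "inj_on F J" using loc_inj_imp_inj[OF J Fcont Floc] .
  obtain s1 z1 where sz: "(s1, z1) \<in> {-e0/3<..<e0/3} \<times> I0" "y = \<Phi> (s1, z1)"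
    using sub y(1) unfolding \<Phi>_def by blast
  have D1: "(s1, z1) \<in> D" using sz(1) unfolding D_def by auto
  have D2: "(t + s1, z1) \<in> D" using sz(1) y(3,4) unfolding D_def by auto
  have vty: "v t y = \<Phi> (t + s1, z1)" using sz(2) flow_comp[OF fl] unfolding \<Phi>_def by simp
  have gy: "g y = (s1, z1)" using gPhi[OF D1] sz(2) by simp
  have gty: "g (v t y) = (t + s1, z1)" using gPhi[OF D2] vty by simp
  have "F (k y) = F (k (v t y))" unfolding F_def using hk[OF y(1)] hk[OF y(2)] gy gty by simp
  then have "k y = k (v t y)" using inj_onD[OF Finj _ kI[OF y(1)] kI[OF y(2)]] by blast
  then have "y = v t y" using hk[OF y(1)] hk[OF y(2)] by metis
  then have "(s1, z1) = (t + s1, z1)" using gy gty by metis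
  then show False using y(3) by simp
qed



lemma tube:
  fixes v :: "real \<Rightarrow> 'a::t2_space \<Rightarrow> 'a"
  assumes fl: "is_flow v" and K: "compact K" and nf: "\<And>t. t \<in> K \<Longrightarrow> v t x \<noteq> x"
  shows "\<exists>W. open W \<and> x \<in> W \<and> (\<forall>t\<in>K. \<forall>y\<in>W. v t y \<notin> W)"
proof -
  define \<Phi> where "\<Phi> = (\<lambda>p::real \<times> 'a. v (fst p) (snd p))"
  have cont: "continuous_on UNIV \<Phi>" using fl unfolding is_flow_def \<Phi>_def by blast
  have H: "\<forall>t\<in>K. \<exists>SV. open (fst SV) \<and> open (snd SV) \<and> t \<in> fst SV \<and> x \<in> snd SV \<and>
              (\<forall>s\<in>fst SV. \<forall>y\<in>snd SV. v s y \<notin> snd SV)"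
  proof
    fix t assume t: "t \<in> K"
    obtain A Bx where AB: "open A" "open Bx" "v t x \<in> A" "x \<in> Bx" "A \<inter> Bx = {}"
      using hausdorff[OF nf[OF t]] by blast
    have "open (\<Phi> -` A \<inter> UNIV)" using continuous_on_open_vimage[OF open_UNIV] cont AB(1) by blast
    then have oA: "open (\<Phi> -` A)" by simp
    have tx: "(t,x) \<in> \<Phi> -` A" using AB(3) by (simp add: \<Phi>_def)
    obtain S V where SV: "open S" "open V" "(t,x) \<in> S \<times> V" "S \<times> V \<subseteq> \<Phi> -` A"
      using open_prod_elim[OF oA tx] by blast
    define V' where "V' = V \<inter> Bx"
    have P: "\<forall>s\<in>S. \<forall>y\<in>V'. v s y \<notin> V'"
    proof (intro ballI)
      fix s y assume s: "s \<in> S" and y: "y \<in> V'"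
      then have "(s,y) \<in> S \<times> V" using V'_def by simp
      then have "(s,y) \<in> \<Phi> -` A" by (rule subsetD[OF SV(4)])
      then have "v s y \<in> A" by (simp add: \<Phi>_def)
      then have "v s y \<notin> Bx" using AB(5) by blast
      then show "v s y \<notin> V'" using V'_def by simp
    qed
    have "open S" "open V'" "t \<in> S" "x \<in> V'" using SV AB unfolding V'_def by auto
    then show "\<exists>SV. open (fst SV) \<and> open (snd SV) \<and> t \<in> fst SV \<and> x \<in> snd SV \<and>
              (\<forall>s\<in>fst SV. \<forall>y\<in>snd SV. v s y \<notin> snd SV)"
      using P by (intro exI[of _ "(S, V')"]) simp
  qed
  obtain SV where SV: "\<forall>t\<in>K. open (fst (SV t)) \<and> open (snd (SV t)) \<and> t \<in> fst (SV t) \<and> x \<in> snd (SV t) \<and>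
              (\<forall>s\<in>fst (SV t). \<forall>y\<in>snd (SV t). v s y \<notin> snd (SV t))"
    using bchoice[OF H] by blast
  have opn: "\<And>T. T \<in> K \<Longrightarrow> open (fst (SV T))" using SV by blast
  have cov: "K \<subseteq> (\<Union>c\<in>K. fst (SV c))" using SV by blast
  obtain D where D: "D \<subseteq> K" "finite D" "K \<subseteq> (\<Union>c\<in>D. fst (SV c))"
    using compactE_image[OF K opn cov] by blast
  define W where "W = (\<Inter>c\<in>D. snd (SV c))"
  have "open W" unfolding W_def
  proof (rule open_INT[OF D(2)])
    show "\<forall>c\<in>D. open (snd (SV c))" using SV D(1) by blast
  qed
  moreover have "x \<in> W" unfolding W_def using SV D(1) by blast
  moreover have "\<forall>t\<in>K. \<forall>y\<in>W. v t y \<notin> W"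
  proof (intro ballI)
    fix t y assume t: "t \<in> K" and y: "y \<in> W"
    obtain c where c: "c \<in> D" "t \<in> fst (SV c)" using D(3) t by blast
    have cK: "c \<in> K" using c(1) D(1) by blast
    have yc: "y \<in> snd (SV c)" using y c(1) unfolding W_def by blast
    have "v t y \<notin> snd (SV c)" using SV cK c(2) yc by blast
    then show "v t y \<notin> W" using c(1) unfolding W_def by blast
  qed
  ultimately show ?thesis by blast
qed

lemma part3:
  fixes v :: "real \<Rightarrow> 'a::t2_space \<Rightarrow> 'a"
  assumes fl: "is_flow v" and CO: "Cl v = Omega v" and lc: "limit_circuit v \<gamma>"
  shows "periodic_orbit v \<gamma>"
proof (rule ccontr)
  assume np: "\<not> periodic_orbit v \<gamma>"
  have nc: "nontrivial_circuit v \<gamma>" using lc unfolding limit_circuit_def by blast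
  have ann: "open_annulus \<noteq> {}"
  proof -
    have "(3/2::complex) \<in> open_annulus" unfolding open_annulus_def by simp
    then show ?thesis by blast
  qed
  have ne: "\<And>A. collar \<gamma> A \<Longrightarrow> A \<noteq> {}"
  proof
    fix A assume "collar \<gamma> A" and A0: "A = {}"
    then have "A homeomorphic open_annulus" unfolding collar_def by blast
    then have "{} homeomorphic open_annulus" using A0 by simp
    then show False using ann by simp
  qed
  have sub: "\<gamma> \<subseteq> Cl v"
  proof -
    have "semi_attracting v \<gamma> \<or> semi_repelling v \<gamma>" using lc unfolding limit_circuit_def by blast
    then show ?thesis
    proof
      assume "semi_attracting v \<gamma>"
      then obtain A where A: "collar \<gamma> A" "\<forall>x\<in>A. omega_limit v x = \<gamma> \<and> pos_orbit v x \<subseteq> A"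
        unfolding semi_attracting_def by blast
      obtain z where z: "z \<in> A" using ne[OF A(1)] by blast
      have g: "omega_limit v z = \<gamma>" using A(2) z by blast
      show ?thesis
      proof
        fix y assume "y \<in> \<gamma>"
        then have "y \<in> omega_limit v z" using g by simp
        then have "y \<in> Omega v" by (rule omega_Omega[OF fl])
        then show "y \<in> Cl v" using CO by simp
      qed
    next
      assume "semi_repelling v \<gamma>"
      then obtain A where A: "collar \<gamma> A" "\<forall>x\<in>A. alpha_limit v x = \<gamma> \<and> neg_orbit v x \<subseteq> A"
        unfolding semi_repelling_def by blast
      obtain z where z: "z \<in> A" using ne[OF A(1)] by blast
      have g: "alpha_limit v z = \<gamma>" using A(2) z by blast
      show ?thesis
      proof
        fix y assume "y \<in> \<gamma>"
        then have "y \<in> alpha_limit v z" using g by simp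
        then have "y \<in> Omega v" by (rule alpha_Omega[OF fl])
        then show "y \<in> Cl v" using CO by simp
      qed
    qed
  qed
  have nc2: "periodic_orbit v \<gamma> \<or> ((\<exists>f. oriented_loop v f \<and> \<gamma> = f ` {0..1}) \<and> \<not> (\<exists>p. \<gamma> = {p}) \<and>
      (\<exists>F E. finite F \<and> (\<forall>p\<in>F. singular v p) \<and> (\<forall>x\<in>E. separatrix v x) \<and>
         \<gamma> = F \<union> (\<Union>x\<in>E. orbit v x)))" using nc unfolding nontrivial_circuit_def .
  have X: "(\<exists>f. oriented_loop v f \<and> \<gamma> = f ` {0..1}) \<and> \<not> (\<exists>p. \<gamma> = {p}) \<and>
      (\<exists>F E. finite F \<and> (\<forall>p\<in>F. singular v p) \<and> (\<forall>x\<in>E. separatrix v x) \<and>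
         \<gamma> = F \<union> (\<Union>x\<in>E. orbit v x))"
  proof -
    from nc2 show ?thesis
    proof
      assume "periodic_orbit v \<gamma>" then show ?thesis using np by contradiction
    next
      assume "(\<exists>f. oriented_loop v f \<and> \<gamma> = f ` {0..1}) \<and> \<not> (\<exists>p. \<gamma> = {p}) \<and>
      (\<exists>F E. finite F \<and> (\<forall>p\<in>F. singular v p) \<and> (\<forall>x\<in>E. separatrix v x) \<and>
         \<gamma> = F \<union> (\<Union>x\<in>E. orbit v x))"
      then show ?thesis .
    qed
  qed
  have X1: "\<exists>f. oriented_loop v f \<and> \<gamma> = f ` {0..1}" using X by (rule conjunct1)
  have ns: "\<not> (\<exists>p. \<gamma> = {p})" using X by (rule conjunct2[THEN conjunct1])
  have X3: "\<exists>F E. finite F \<and> (\<forall>p\<in>F. singular v p) \<and> (\<forall>x\<in>E. separatrix v x) \<and>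
         \<gamma> = F \<union> (\<Union>x\<in>E. orbit v x)" using X by (rule conjunct2[THEN conjunct2])
  from X1 obtain f where fX: "oriented_loop v f \<and> \<gamma> = f ` {0..1}" ..
  have f: "oriented_loop v f" "\<gamma> = f ` {0..1}" using fX by (rule conjunct1, rule conjunct2)
  from X3 obtain F where "\<exists>E. finite F \<and> (\<forall>p\<in>F. singular v p) \<and> (\<forall>x\<in>E. separatrix v x) \<and>
         \<gamma> = F \<union> (\<Union>x\<in>E. orbit v x)" ..
  then obtain E where FE: "finite F \<and> (\<forall>p\<in>F. singular v p) \<and> (\<forall>x\<in>E. separatrix v x) \<and>
         \<gamma> = F \<union> (\<Union>x\<in>E. orbit v x)" ..
  have F: "finite F" using FE by (rule conjunct1)
  have E: "\<forall>x\<in>E. separatrix v x" using FE by (rule conjunct2[THEN conjunct2, THEN conjunct1])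
  have gF: "\<gamma> = F \<union> (\<Union>x\<in>E. orbit v x)" using FE by (rule conjunct2[THEN conjunct2, THEN conjunct2])
  have E0: "E = {}"
  proof (rule ccontr)
    assume "E \<noteq> {}"
    then obtain e where e: "e \<in> E" by blast
    have sep: "separatrix v e" using E e by blast
    have eo: "e \<in> orbit v e"
    proof -
      have "e = v 0 e" using flow_zero[OF fl] by simp
      then show ?thesis unfolding orbit_def by (rule range_eqI)
    qed
    have "e \<in> \<gamma>" using gF e eo by blast
    then have "e \<in> Cl v" using sub by blast
    moreover have ns: "\<not> singular v e" using sep unfolding separatrix_def by blast
    ultimately obtain T where T: "T > 0" "v T e = e" unfolding Cl_def by blast
    have l: "e \<in> omega_limit v e" "e \<in> alpha_limit v e" using periodic_in_limits[OF fl T(2) T(1)] by blast+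
    obtain p where p: "singular v p" "omega_limit v e = {p} \<or> alpha_limit v e = {p}"
      using sep unfolding separatrix_def by blast
    have "e = p" using p(2) l by blast
    then show False using ns p(1) by simp
  qed
  have gfin: "finite \<gamma>" using gF E0 F by simp
  have fc: "continuous_on UNIV f" using f(1) unfolding oriented_loop_def by blast
  have gcon: "connected \<gamma>"
  proof -
    have "continuous_on {0..1} f" using continuous_on_subset[OF fc] by blast
    then have "connected (f ` {0..1::real})" using connected_continuous_image connected_Icc by blast
    then show ?thesis using f(2) by simp
  qed
  have f0: "f 0 \<in> \<gamma>" using f(2) by simp
  obtain b where b: "b \<in> \<gamma>" "b \<noteq> f 0"
  proof -
    have "\<gamma> \<noteq> {f 0}" using ns by blast
    then show ?thesis using f0 that by blast
  qed
  show False using finite_connected_t2[OF gfin gcon f0 b(1)] b(2) by simp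
qed

lemma conj5:
  assumes "P1 \<and> P2 \<and> P3 \<and> P4 \<and> P5"
  shows "P1" "P2" "P3" "P4" "P5"
  using assms by simp_all

lemma conj3:
  assumes "P1 \<and> P2 \<and> P3"
  shows "P1" "P2" "P3"
  using assms by simp_all

lemma part4:
  fixes v :: "real \<Rightarrow> 'a::t2_space \<Rightarrow> 'a"
  assumes fl: "is_flow v" and CO: "Cl v = Omega v" and wh: "wandering_holonomy v \<gamma>"
  shows False
proof -
  define \<Phi> where "\<Phi> = (\<lambda>p::real \<times> 'a. v (fst p) (snd p))"
  obtain x where x: "x \<in> \<gamma>" "\<not> singular v x"
    and HW: "\<forall>W. open W \<and> x \<in> W \<longrightarrow>
        (\<exists>I. I \<subseteq> W \<and> x \<in> I \<and> transverse_arc v I \<and> fr_orientation_reversing v I \<and>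
             fr_dom v I \<noteq> {} \<and> fr_dom v I \<inter> first_return v I ` fr_dom v I = {})"
    using wh unfolding wandering_holonomy_def by blast
  have HW': "\<And>W. open W \<Longrightarrow> x \<in> W \<Longrightarrow>
        \<exists>I. I \<subseteq> W \<and> x \<in> I \<and> transverse_arc v I \<and>
             fr_dom v I \<noteq> {} \<and> fr_dom v I \<inter> first_return v I ` fr_dom v I = {}"
  proof -
    fix W assume "open W" "x \<in> W"
    then have "\<exists>I. I \<subseteq> W \<and> x \<in> I \<and> transverse_arc v I \<and> fr_orientation_reversing v I \<and>
             fr_dom v I \<noteq> {} \<and> fr_dom v I \<inter> first_return v I ` fr_dom v I = {}" using HW by blast
    then obtain I where "I \<subseteq> W \<and> x \<in> I \<and> transverse_arc v I \<and> fr_orientation_reversing v I \<and>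
             fr_dom v I \<noteq> {} \<and> fr_dom v I \<inter> first_return v I ` fr_dom v I = {}" ..
    then show "\<exists>I. I \<subseteq> W \<and> x \<in> I \<and> transverse_arc v I \<and>
             fr_dom v I \<noteq> {} \<and> fr_dom v I \<inter> first_return v I ` fr_dom v I = {}" by blast
  qed
  from HW'[OF open_UNIV UNIV_I] obtain I0 where I0c: "I0 \<subseteq> UNIV \<and> x \<in> I0 \<and> transverse_arc v I0 \<and>
             fr_dom v I0 \<noteq> {} \<and> fr_dom v I0 \<inter> first_return v I0 ` fr_dom v I0 = {}" ..
  note I0all = conj5[OF I0c]
  note I0 = I0all(2) I0all(3)
  have I0h: "I0 homeomorphic {0<..<1::real} \<or> I0 homeomorphic {0..<1::real}"
    using I0(2) unfolding transverse_arc_def by blast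
  obtain e0 g where e0: "e0 > 0" and ob: "open (\<Phi> ` ({-e0<..<e0} \<times> I0))"
    and h0: "homeomorphism ({-e0<..<e0} \<times> I0) (\<Phi> ` ({-e0<..<e0} \<times> I0)) \<Phi> g"
    using I0(2) unfolding transverse_arc_def \<Phi>_def by blast
  define W0 where "W0 = \<Phi> ` ({-e0/3<..<e0/3} \<times> I0)"
  have oin: "openin (top_of_set ({-e0<..<e0} \<times> I0)) ({-e0/3<..<e0/3} \<times> I0)"
  proof -
    have eq: "{-e0/3<..<e0/3} \<times> I0 = ({-e0<..<e0} \<times> I0) \<inter> ({-e0/3<..<e0/3} \<times> UNIV)"
      using e0 by auto
    have "open ({-e0/3<..<e0/3} \<times> (UNIV::'a set))" by (intro open_Times) auto
    then show ?thesis unfolding openin_open using eq by blast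
  qed
  have oW0: "open W0"
    using openin_open_trans[OF homeomorphism_imp_open_map[OF h0 oin] ob] unfolding W0_def .
  have xW0: "x \<in> W0"
  proof -
    have "x = \<Phi> (0, x)" unfolding \<Phi>_def using flow_zero[OF fl] by simp
    moreover have "(0, x) \<in> {-e0/3<..<e0/3} \<times> I0" using e0 I0(1) by simp
    ultimately show ?thesis unfolding W0_def by (rule image_eqI)
  qed
  have KL: "\<And>I y t. transverse_arc v I \<Longrightarrow> I \<subseteq> W0 \<Longrightarrow> y \<in> I \<Longrightarrow> v t y \<in> I \<Longrightarrow> 0 < t \<Longrightarrow> t < e0/3 \<Longrightarrow> False"
  proof -
    fix I y t assume a: "transverse_arc v I" "I \<subseteq> W0" "y \<in> I" "v t y \<in> I" "0 < t" "t < e0/3"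
    have h0': "homeomorphism ({-e0<..<e0} \<times> I0) ((\<lambda>p. v (fst p) (snd p)) ` ({-e0<..<e0} \<times> I0)) (\<lambda>p. v (fst p) (snd p)) g"
      using h0 unfolding \<Phi>_def .
    have sub': "I \<subseteq> (\<lambda>p. v (fst p) (snd p)) ` ({-e0/3<..<e0/3} \<times> I0)" using a(2) unfolding W0_def \<Phi>_def .
    show False by (rule key_lemma[OF fl I0h h0' a(1) sub' a(3) a(4) a(5) a(6)])
  qed
  show False
  proof (cases "x \<in> Cl v")
    case True
    then obtain T where T: "T > 0" "v T x = x" using x(2) unfolding Cl_def by blast
    from HW'[OF oW0 xW0] obtain I1 where I1c: "I1 \<subseteq> W0 \<and> x \<in> I1 \<and> transverse_arc v I1 \<and>
             fr_dom v I1 \<noteq> {} \<and> fr_dom v I1 \<inter> first_return v I1 ` fr_dom v I1 = {}" ..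
    note I1 = conj5[OF I1c]
    have noret: "\<And>t. 0 < t \<Longrightarrow> t < e0/3 \<Longrightarrow> v t x \<noteq> x"
    proof
      fix t assume t: "0 < t" "t < e0/3" "v t x = x"
      have "v t x \<in> I1" using t(3) I1(2) by simp
      then show False using KL[OF I1(3) I1(1) I1(2) _ t(1) t(2)] by blast
    qed
    define P where "P = {t. v t x = x} \<inter> {e0/3..}"
    have cP: "closed P"
    proof -
      have "closed {t. v t x = x}"
        by (rule closed_Collect_eq[OF flow_cont_t[OF fl] continuous_on_const])
      then show ?thesis unfolding P_def by (intro closed_Int closed_atLeast)
    qed
    have TP: "T \<in> P"
    proof -
      have "\<not> T < e0/3" using noret[OF T(1)] T(2) by blast
      then show ?thesis unfolding P_def using T(2) by simp
    qed
    have bP: "bdd_below P" unfolding P_def by (rule bdd_belowI[of _ "e0/3"]) simp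
    define Ts where "Ts = Inf P"
    have Pne: "P \<noteq> {}" using TP by blast
    have TsP: "Ts \<in> P" unfolding Ts_def by (rule closed_contains_Inf[OF Pne bP cP])
    have Ts: "Ts \<ge> e0/3" "v Ts x = x" using TsP unfolding P_def by auto
    have Tspos: "Ts > 0" using Ts(1) e0 by simp
    have minT: "\<And>s. 0 < s \<Longrightarrow> s < Ts \<Longrightarrow> v s x \<noteq> x"
    proof
      fix s assume s: "0 < s" "s < Ts" "v s x = x"
      have "\<not> s < e0/3" using noret[OF s(1)] s(3) by blast
      then have "s \<in> P" unfolding P_def using s(3) by simp
      then have "Ts \<le> s" unfolding Ts_def by (rule cInf_lower[OF _ bP])
      then show False using s(2) by simp
    qed
    have nf: "\<And>t. t \<in> {e0/3..Ts - e0/3} \<Longrightarrow> v t x \<noteq> x"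
    proof -
      fix t assume "t \<in> {e0/3..Ts - e0/3}"
      then have "0 < t" "t < Ts" using e0 by auto
      then show "v t x \<noteq> x" by (rule minT)
    qed
    from tube[OF fl compact_Icc nf] obtain W1 where W1c: "open W1 \<and> x \<in> W1 \<and> (\<forall>t\<in>{e0/3..Ts - e0/3}. \<forall>y\<in>W1. v t y \<notin> W1)" ..
    note W1 = conj3[OF W1c]
    have oW: "open (W0 \<inter> W1)" using oW0 W1(1) by (rule open_Int)
    have xW: "x \<in> W0 \<inter> W1" using xW0 W1(2) by simp
    from HW'[OF oW xW] obtain I where Ic: "I \<subseteq> W0 \<inter> W1 \<and> x \<in> I \<and> transverse_arc v I \<and>
             fr_dom v I \<noteq> {} \<and> fr_dom v I \<inter> first_return v I ` fr_dom v I = {}" ..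
    note Iall = conj5[OF Ic]
    note I = Iall(1) Iall(2) Iall(3) Iall(5)
    have IW0: "I \<subseteq> W0" using I(1) by blast
    have IW1: "I \<subseteq> W1" using I(1) by blast
    have nor: "\<And>s. 0 < s \<Longrightarrow> s < Ts \<Longrightarrow> v s x \<notin> I"
    proof
      fix s assume s: "0 < s" "s < Ts" "v s x \<in> I"
      consider "s < e0/3" | "s \<in> {e0/3..Ts - e0/3}" | "Ts - e0/3 < s" unfolding atLeastAtMost_iff by argo
      then show False
      proof cases
        case 1 then show False using KL[OF I(3) IW0 I(2) s(3) s(1)] by blast
      next
        case 2
        have "x \<in> W1" using W1(2) .
        then have "v s x \<notin> W1" using W1(3) 2 by blast
        then show False using s(3) IW1 by blast
      next
        case 3
        have "v (Ts - s) (v s x) = v (Ts - s + s) x" by (rule flow_comp[OF fl])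
        then have "v (Ts - s) (v s x) = x" using Ts(2) by simp
        then have r: "v (Ts - s) (v s x) \<in> I" using I(2) by simp
        have "0 < Ts - s" "Ts - s < e0/3" using s 3 by auto
        then show False using KL[OF I(3) IW0 s(3) r] by blast
      qed
    qed
    have ft: "fr_time v I x = Ts"
      unfolding fr_time_def
    proof (rule the_equality)
      show "0 < Ts \<and> v Ts x \<in> I \<and> (\<forall>s. 0 < s \<and> s < Ts \<longrightarrow> v s x \<notin> I)"
        using Tspos Ts(2) I(2) nor by simp
    next
      fix t assume t: "0 < t \<and> v t x \<in> I \<and> (\<forall>s. 0 < s \<and> s < t \<longrightarrow> v s x \<notin> I)"
      show "t = Ts"
      proof (rule linorder_cases[of t Ts])
        assume "t < Ts" then show ?thesis using nor t by blast
      next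
        assume "Ts < t"
        then have "v Ts x \<notin> I" using t Tspos by blast
        then show ?thesis using Ts(2) I(2) by simp
      qed
    qed
    have xd: "x \<in> fr_dom v I" unfolding fr_dom_def using I(2) Tspos Ts(2) by auto
    have "first_return v I x = x" unfolding first_return_def ft using Ts(2) .
    then have "x \<in> first_return v I ` fr_dom v I" using xd by (metis image_eqI)
    then have "x \<in> fr_dom v I \<inter> first_return v I ` fr_dom v I" using xd by (rule IntI[rotated])
    then show False using I(4) by (metis empty_iff)
  next
    case False
    then have xO: "x \<notin> Omega v" using CO by simp
    have exU: "\<exists>U. open U \<and> x \<in> U \<and> (\<exists>T. \<forall>t>T. v t ` U \<inter> U = {})"
    proof (rule ccontr)
      assume c: "\<not> (\<exists>U. open U \<and> x \<in> U \<and> (\<exists>T. \<forall>t>T. v t ` U \<inter> U = {}))"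
      have "x \<in> Omega v" unfolding Omega_def
      proof (intro CollectI allI impI)
        fix U T assume U: "open U \<and> x \<in> U"
        show "\<exists>t>T. v t ` U \<inter> U \<noteq> {}"
        proof (rule ccontr)
          assume "\<not> (\<exists>t>T. v t ` U \<inter> U \<noteq> {})"
          then have "\<forall>t>T. v t ` U \<inter> U = {}" by metis
          then show False using c U by metis
        qed
      qed
      then show False using xO by simp
    qed
    from exU obtain U where Uc: "open U \<and> x \<in> U \<and> (\<exists>T. \<forall>t>T. v t ` U \<inter> U = {})" ..
    note U12 = conj3[OF Uc]
    from U12(3) obtain T0 where U3: "\<forall>t>T0. v t ` U \<inter> U = {}" ..
    note U = U12(1) U12(2) U3
    have nf: "\<And>t. t \<in> {e0/3..T0} \<Longrightarrow> v t x \<noteq> x"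
    proof
      fix t assume t: "t \<in> {e0/3..T0}" "v t x = x"
      have "t > 0" using t(1) e0 by simp
      then have "x \<in> Cl v" unfolding Cl_def using t(2) by blast
      then show False using False by simp
    qed
    from tube[OF fl compact_Icc nf] obtain W1 where W1c: "open W1 \<and> x \<in> W1 \<and> (\<forall>t\<in>{e0/3..T0}. \<forall>y\<in>W1. v t y \<notin> W1)" ..
    note W1 = conj3[OF W1c]
    have oW: "open (U \<inter> W0 \<inter> W1)" using U(1) oW0 W1(1) by (intro open_Int)
    have xW: "x \<in> U \<inter> W0 \<inter> W1" using U(2) xW0 W1(2) by simp
    from HW'[OF oW xW] obtain I where Ic: "I \<subseteq> U \<inter> W0 \<inter> W1 \<and> x \<in> I \<and> transverse_arc v I \<and>
             fr_dom v I \<noteq> {} \<and> fr_dom v I \<inter> first_return v I ` fr_dom v I = {}" ..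
    note Iall = conj5[OF Ic]
    note I = Iall(1) Iall(3) Iall(4)
    obtain y where y: "y \<in> fr_dom v I" using I(3) by blast
    obtain t where t: "y \<in> I" "t > 0" "v t y \<in> I" using y unfolding fr_dom_def by blast
    have IW0: "I \<subseteq> W0" using I(1) by blast
    consider "t < e0/3" | "t \<in> {e0/3..T0}" | "T0 < t" unfolding atLeastAtMost_iff by argo
    then show False
    proof cases
      case 1 then show False using KL[OF I(2) IW0 t(1) t(3) t(2)] by blast
    next
      case 2
      have "y \<in> W1" using t(1) I(1) by blast
      then have "v t y \<notin> W1" using W1(3) 2 by blast
      then show False using t(3) I(1) by blast
    next
      case 3
      have "y \<in> U" "v t y \<in> U" using t(1) t(3) I(1) by blast+
      then have "v t y \<in> v t ` U \<inter> U" by blast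
      moreover have "v t ` U \<inter> U = {}" using U(3) 3 by simp
      ultimately show False by (metis empty_iff)
    qed
  qed
qed

theorem mainTheorem9:
  fixes v :: "real \<Rightarrow> 'a::t2_space \<Rightarrow> 'a"
  assumes "is_surface (UNIV :: 'a set)"
    and "compact (UNIV :: 'a set)"
    and "is_flow v"
    and "Cl v = Omega v"
  shows "closed (Cl v) \<and> (\<forall>x. recurrent v x \<longrightarrow> x \<in> Cl v) \<and>
         (\<forall>\<gamma>. limit_circuit v \<gamma> \<longrightarrow> periodic_orbit v \<gamma>) \<and>
         (\<forall>\<gamma>. \<not> wandering_holonomy v \<gamma>)"
proof (intro conjI allI impI)
  show "closed (Cl v)" using Omega_closed[of v] assms(4) by simp
next
  fix x assume r: "recurrent v x"
  have "x \<in> omega_limit v x \<union> alpha_limit v x" using r unfolding recurrent_def .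
  then have "x \<in> Omega v"
  proof
    assume "x \<in> omega_limit v x" then show ?thesis by (rule omega_Omega[OF assms(3)])
  next
    assume "x \<in> alpha_limit v x" then show ?thesis by (rule alpha_Omega[OF assms(3)])
  qed
  then show "x \<in> Cl v" using assms(4) by simp
next
  fix \<gamma> assume "limit_circuit v \<gamma>"
  then show "periodic_orbit v \<gamma>" by (rule part3[OF assms(3) assms(4)])
next
  fix \<gamma> show "\<not> wandering_holonomy v \<gamma>"
  proof
    assume "wandering_holonomy v \<gamma>"
    then show False by (rule part4[OF assms(3) assms(4)])
  qed
qed


end
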